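(* Let $A,B,s>0$ and $p$ a positive integer, with $s\ge1$ and $p\le\sqrt B$. Then \[ \frac{p^2}{e}\le\sum_{\substack{k_1,k_2\in\mathbb{Z}\\ |k_1p-A|\le s\sqrt B,\ |k_2p-A|\le s\sqrt B}}(k_1p-k_2p)^2\exp\left(-\frac{(k_1p-A)^2}{2B}-\frac{(k_2p-A)^2}{2B}\right)\le\frac{24e^4\pi B^2}{p^2}. \] *)

theory Defs
  imports "HOL-Analysis.Analysis"
begin

end

theory Submission
  imports Defs
begin

lemma geo_bound:
  fixes f :: "int \<Rightarrow> real" and g :: "int \<Rightarrow> nat"
  assumes "finite K" "inj_on g K" "0 \<le> r" "r < 1" "\<And>k. k \<in> K \<Longrightarrow> f k \<le> r ^ g k"
  shows "sum f K \<le> 1 / (1 - r)"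
proof -
  have "sum f K \<le> sum (\<lambda>k. r ^ g k) K" using assms(5) by (rule sum_mono)
  also have "\<dots> = sum (\<lambda>n. r ^ n) (g ` K)" using assms(2) by (simp add: sum.reindex)
  also have "\<dots> \<le> (\<Sum>n. r ^ n)"
    by (rule sum_le_suminf) (use assms in \<open>auto intro: summable_geometric\<close>)
  also have "\<dots> = 1 / (1 - r)" using assms by (simp add: suminf_geometric)
  finally show ?thesis .
qed

lemma G_bound:
  fixes K :: "int set" and p \<sigma> A :: real
  assumes fin: "finite K" and pp: "p > 0" and sp: "\<sigma> > 0" and ps: "p \<le> \<sigma>"
  shows "(\<Sum>k\<in>K. exp (- \<bar>of_int k * p - A\<bar> / \<sigma>)) \<le> 4 * \<sigma> / p"
proof -
  define r where "r = exp (- p / \<sigma>)"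
  define k0 where "k0 = \<lceil>A / p\<rceil>"
  have r0: "0 \<le> r" and r1: "r < 1" using pp sp by (auto simp: r_def)
  have "exp (p / \<sigma>) \<ge> 1 + p / \<sigma>" by (rule exp_ge_add_one_self)
  hence "r \<le> 1 / (1 + p / \<sigma>)" unfolding r_def using pp sp
    by (simp add: exp_minus field_simps)
  hence "1 - r \<ge> (p/\<sigma>) / (1 + p/\<sigma>)" using pp sp by (simp add: field_simps)
  moreover have "(p/\<sigma>) / (1 + p/\<sigma>) \<ge> (p/\<sigma>) / 2" using pp sp ps
    by (intro divide_left_mono) (auto simp: field_simps)
  ultimately have "1 - r \<ge> p / (2*\<sigma>)" by simp
  hence geo: "1 / (1 - r) \<le> 2 * \<sigma> / p" using pp sp r1
    by (simp add: field_simps)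
  have rp: "exp (- (real n * p) / \<sigma>) = r ^ n" for n :: nat
    unfolding r_def by (simp add: exp_of_nat_mult[symmetric] algebra_simps)
  define Kp where "Kp = {k\<in>K. k \<ge> k0}"
  define Km where "Km = {k\<in>K. k < k0}"
  have split: "K = Kp \<union> Km" "Kp \<inter> Km = {}" by (auto simp: Kp_def Km_def)
  have "(\<Sum>k\<in>K. exp (- \<bar>of_int k * p - A\<bar> / \<sigma>)) =
        (\<Sum>k\<in>Kp. exp (- \<bar>of_int k * p - A\<bar> / \<sigma>)) + (\<Sum>k\<in>Km. exp (- \<bar>of_int k * p - A\<bar> / \<sigma>))"
    using fin split by (simp add: sum.union_disjoint[symmetric])
  also have "(\<Sum>k\<in>Kp. exp (- \<bar>of_int k * p - A\<bar> / \<sigma>)) \<le> 1 / (1 - r)"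
  proof (rule geo_bound[where g = "\<lambda>k. nat (k - k0)"])
    show "finite Kp" using fin by (simp add: Kp_def)
    show "inj_on (\<lambda>k. nat (k - k0)) Kp" by (auto simp: inj_on_def Kp_def)
    fix k assume k: "k \<in> Kp"
    hence kk: "k \<ge> k0" by (simp add: Kp_def)
    have "A / p \<le> of_int k0" unfolding k0_def by simp
    hence "A \<le> of_int k0 * p" using pp by (simp add: field_simps)
    hence h: "of_int k * p - A \<ge> real (nat (k - k0)) * p" using kk pp
      by (simp add: algebra_simps)
    have "0 \<le> real (nat (k - k0)) * p" using pp by simp
    hence "\<bar>of_int k * p - A\<bar> \<ge> real (nat (k - k0)) * p" using h by linarith
    hence "- \<bar>of_int k * p - A\<bar> / \<sigma> \<le> - (real (nat (k - k0)) * p) / \<sigma>"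
      using sp by (simp add: divide_right_mono)
    hence "exp (- \<bar>of_int k * p - A\<bar> / \<sigma>) \<le> exp (- (real (nat (k - k0)) * p) / \<sigma>)" by simp
    thus "exp (- \<bar>of_int k * p - A\<bar> / \<sigma>) \<le> r ^ nat (k - k0)" using rp[of "nat (k - k0)"] by linarith
  qed (use r0 r1 in auto)
  also have "(\<Sum>k\<in>Km. exp (- \<bar>of_int k * p - A\<bar> / \<sigma>)) \<le> 1 / (1 - r)"
  proof (rule geo_bound[where g = "\<lambda>k. nat (k0 - 1 - k)"])
    show "finite Km" using fin by (simp add: Km_def)
    show "inj_on (\<lambda>k. nat (k0 - 1 - k)) Km" by (auto simp: inj_on_def Km_def)
    fix k assume k: "k \<in> Km"
    hence kk: "k \<le> k0 - 1" by (simp add: Km_def)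
    have "of_int (k0 - 1) < A / p" unfolding k0_def by linarith
    hence "of_int (k0 - 1) * p < A" using pp by (simp add: field_simps)
    hence h: "A - of_int k * p \<ge> real (nat (k0 - 1 - k)) * p" using kk pp
      by (simp add: algebra_simps)
    have "0 \<le> real (nat (k0 - 1 - k)) * p" using pp by simp
    hence "\<bar>of_int k * p - A\<bar> \<ge> real (nat (k0 - 1 - k)) * p" using h by linarith
    hence "- \<bar>of_int k * p - A\<bar> / \<sigma> \<le> - (real (nat (k0 - 1 - k)) * p) / \<sigma>"
      using sp by (simp add: divide_right_mono)
    hence "exp (- \<bar>of_int k * p - A\<bar> / \<sigma>) \<le> exp (- (real (nat (k0 - 1 - k)) * p) / \<sigma>)" by simp
    thus "exp (- \<bar>of_int k * p - A\<bar> / \<sigma>) \<le> r ^ nat (k0 - 1 - k)" using rp[of "nat (k0 - 1 - k)"] by linarith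
  qed (use r0 r1 in auto)
  finally show ?thesis using geo by linarith
qed

lemma sum_prod_sq:
  fixes f g :: "int \<Rightarrow> real"
  shows "(\<Sum>z\<in>K \<times> K. f (fst z) * g (snd z)) = sum f K * sum g K"
proof -
  have "sum f K * sum g K = (\<Sum>a\<in>K. \<Sum>b\<in>K. f a * g b)" by (rule sum_product)
  also have "\<dots> = (\<Sum>(a,b)\<in>K \<times> K. f a * g b)" by (rule sum.cartesian_product)
  also have "\<dots> = (\<Sum>z\<in>K \<times> K. f (fst z) * g (snd z))" by (simp add: case_prod_beta)
  finally show ?thesis by simp
qed

theorem claim6p2:
  fixes A B s :: real and p :: nat
  assumes "A > 0" "B > 0" "s > 0" "s \<ge> 1" "p > 0" "real p \<le> sqrt B"
  shows "real p ^ 2 / exp 1 \<le>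
      (\<Sum>(k1, k2) \<in> {(k1::int, k2::int). \<bar>of_int k1 * real p - A\<bar> \<le> s * sqrt B \<and>
                                           \<bar>of_int k2 * real p - A\<bar> \<le> s * sqrt B}.
         (of_int k1 * real p - of_int k2 * real p) ^ 2 *
         exp (- ((of_int k1 * real p - A) ^ 2 / (2 * B)) - (of_int k2 * real p - A) ^ 2 / (2 * B)))
    \<and>
      (\<Sum>(k1, k2) \<in> {(k1::int, k2::int). \<bar>of_int k1 * real p - A\<bar> \<le> s * sqrt B \<and>
                                           \<bar>of_int k2 * real p - A\<bar> \<le> s * sqrt B}.
         (of_int k1 * real p - of_int k2 * real p) ^ 2 *
         exp (- ((of_int k1 * real p - A) ^ 2 / (2 * B)) - (of_int k2 * real p - A) ^ 2 / (2 * B)))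
      \<le> 24 * exp 4 * pi * B ^ 2 / real p ^ 2"
proof -
  define \<sigma> where "\<sigma> = sqrt B"
  have sp: "\<sigma> > 0" using assms by (simp add: \<sigma>_def)
  have B2: "B = \<sigma>^2" using assms by (simp add: \<sigma>_def)
  have ps: "real p \<le> \<sigma>" using assms by (simp add: \<sigma>_def)
  have pp: "real p > 0" using assms by simp
  define x where "x k = of_int k * real p - A" for k :: int
  define w where "w k = exp (- ((x k)^2 / (2*B)))" for k
  define K where "K = {k::int. \<bar>x k\<bar> \<le> s * \<sigma>}"
  define N where "N = \<lceil>(A + s*\<sigma>) / real p\<rceil>"
  have "K \<subseteq> {-N..N}"
  proof
    fix k assume "k \<in> K"
    hence h: "\<bar>of_int k * real p - A\<bar> \<le> s*\<sigma>" by (simp add: K_def x_def)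
    have "\<bar>of_int k\<bar> * real p \<le> A + s*\<sigma>"
      using h assms(1) pp by (auto simp: abs_if algebra_simps split: if_splits)
    hence "\<bar>of_int k\<bar> \<le> (A + s*\<sigma>) / real p" using pp by (simp add: field_simps)
    hence "\<bar>of_int k\<bar> \<le> real_of_int N" unfolding N_def by linarith
    thus "k \<in> {-N..N}" by auto
  qed
  hence finK: "finite K" by (rule finite_subset) simp
  have setEq: "{(k1::int, k2::int). \<bar>of_int k1 * real p - A\<bar> \<le> s * sqrt B \<and>
                                           \<bar>of_int k2 * real p - A\<bar> \<le> s * sqrt B} = K \<times> K"
    by (auto simp: K_def x_def \<sigma>_def)
  define F where "F = (\<lambda>(k1::int, k2::int). (x k1 - x k2)^2 * (w k1 * w k2))"
  have summ: "(\<lambda>(k1::int, k2::int). (of_int k1 * real p - of_int k2 * real p) ^ 2 *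
         exp (- ((of_int k1 * real p - A) ^ 2 / (2 * B)) - (of_int k2 * real p - A) ^ 2 / (2 * B))) = F"
    by (auto simp: F_def x_def w_def exp_diff exp_minus field_simps)
  define S where "S = sum F (K \<times> K)"
  have Fnn: "\<And>z. 0 \<le> F z" by (auto simp: F_def w_def)
  have lower: "real p ^ 2 / exp 1 \<le> S"
  proof -
    define k where "k = \<lceil>(A - \<sigma>) / real p\<rceil>"
    have a: "(A - \<sigma>) / real p \<le> of_int k" "of_int k < (A - \<sigma>) / real p + 1"
      unfolding k_def by linarith+
    have a1: "A - \<sigma> \<le> of_int k * real p" using a(1) pp by (simp add: field_simps)
    have a2: "of_int k * real p < A - \<sigma> + real p" using a(2) pp by (simp add: field_simps)
    have xk: "\<bar>x k\<bar> \<le> \<sigma>" using a1 a2 ps by (simp add: x_def)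
    have xk1: "\<bar>x (k+1)\<bar> \<le> \<sigma>" using a1 a2 ps by (simp add: x_def algebra_simps)
    have s\<sigma>: "\<sigma> \<le> s * \<sigma>" using assms(4) sp by simp
    have inK: "(k+1, k) \<in> K \<times> K" using xk xk1 s\<sigma> by (auto simp: K_def)
    have "(x k)^2 \<le> B" using power_mono[OF xk abs_ge_zero, of 2] B2 by simp
    hence wk: "exp (-1/2) \<le> w k" unfolding w_def using assms(2) by (simp add: field_simps)
    have "(x (k+1))^2 \<le> B" using power_mono[OF xk1 abs_ge_zero, of 2] B2 by simp
    hence wk1: "exp (-1/2) \<le> w (k+1)" unfolding w_def using assms(2) by (simp add: field_simps)
    have "exp (-1/2) * exp (-1/2) \<le> w (k+1) * w k"
      using wk wk1 by (intro mult_mono) (auto simp: w_def)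
    moreover have "exp (-1/2) * exp (-1/2) = 1 / exp (1::real)"
      by (simp add: mult_exp_exp exp_minus_inverse flip: exp_minus) (simp add: exp_minus field_simps)
    ultimately have ww: "1 / exp 1 \<le> w (k+1) * w k" by simp
    have "x (k+1) - x k = real p" by (simp add: x_def algebra_simps)
    hence "F (k+1, k) = real p ^ 2 * (w (k+1) * w k)" by (simp add: F_def)
    hence "real p ^ 2 / exp 1 \<le> F (k+1, k)" using ww
      by (metis mult_left_mono times_divide_eq_right mult_1_right zero_le_power pp less_imp_le)
    also have "\<dots> \<le> S" unfolding S_def
      by (rule member_le_sum) (use inK finK Fnn in auto)
    finally show ?thesis .
  qed
  define G where "G = (\<Sum>k\<in>K. exp (- \<bar>of_int k * real p - A\<bar> / \<sigma>))"
  have HG: "G \<le> 4 * \<sigma> / real p" unfolding G_def using finK pp sp ps by (rule G_bound)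
  have G0: "0 \<le> G" unfolding G_def by (simp add: sum_nonneg)
  have Hw: "sum w K \<le> exp (1/2) * G" unfolding G_def sum_distrib_left
  proof (rule sum_mono)
    fix k
    define u where "u = \<bar>x k\<bar> / \<sigma>"
    have "(x k)^2 / (2*B) = u^2/2" using sp B2 by (simp add: u_def power_divide)
    moreover have "u^2/2 \<ge> u - 1/2" using sum_squares_ge_zero[of "u-1" 0]
      by (simp add: power2_eq_square algebra_simps)
    ultimately have "- ((x k)^2 / (2*B)) \<le> 1/2 + - \<bar>of_int k * real p - A\<bar> / \<sigma>"
      by (simp add: u_def x_def)
    hence "w k \<le> exp (1/2 + - \<bar>of_int k * real p - A\<bar> / \<sigma>)" by (simp add: w_def)
    thus "w k \<le> exp (1/2) * exp (- \<bar>of_int k * real p - A\<bar> / \<sigma>)" by (simp add: mult_exp_exp)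
  qed
  have Hxw: "(\<Sum>k\<in>K. (x k)^2 * w k) \<le> 4 * B * G" unfolding G_def sum_distrib_left
  proof (rule sum_mono)
    fix k
    define u where "u = \<bar>x k\<bar> / \<sigma>"
    have u0: "u \<ge> 0" using sp by (simp add: u_def)
    have xu: "(x k)^2 = B * u^2" using sp B2 by (simp add: u_def power_divide)
    have e1: "(x k)^2 / (2*B) = u^2/2" using sp B2 by (simp add: u_def power_divide)
    have "1 + (u^2/2 - u) \<le> exp (u^2/2 - u)" by (rule exp_ge_add_one_self)
    moreover have "u^2 \<le> 4 * (1 + (u^2/2 - u))"
      using sum_squares_ge_zero[of "u-2" 0] by (simp add: power2_eq_square algebra_simps)
    ultimately have "u^2 \<le> 4 * exp (u^2/2 - u)" by (smt (verit))
    hence "u^2 * exp (- (u^2/2)) \<le> 4 * exp (u^2/2 - u) * exp (- (u^2/2))"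
      by (rule mult_right_mono) simp
    also have "\<dots> = 4 * exp (- u)" by (simp add: exp_add[symmetric])
    finally have "B * (u^2 * exp (- (u^2/2))) \<le> B * (4 * exp (- u))"
      using assms(2) by (intro mult_left_mono) auto
    moreover have "(x k)^2 * w k = B * (u^2 * exp (- (u^2/2)))"
      using xu e1 by (simp add: w_def)
    moreover have "- u = - \<bar>of_int k * real p - A\<bar> / \<sigma>" by (simp add: u_def x_def)
    ultimately show "(x k)^2 * w k \<le> 4 * B * exp (- \<bar>of_int k * real p - A\<bar> / \<sigma>)"
      by simp
  qed
  have w0: "\<And>k. 0 \<le> w k" by (simp add: w_def)
  have upper: "S \<le> 24 * exp 4 * pi * B ^ 2 / real p ^ 2"
  proof -
    have "S \<le> (\<Sum>z\<in>K \<times> K. (2 * ((x (fst z))^2 * w (fst z))) * w (snd z) + (2 * w (fst z)) * ((x (snd z))^2 * w (snd z)))"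
      unfolding S_def
    proof (rule sum_mono)
      fix z :: "int \<times> int"
      obtain a b where z: "z = (a, b)" by (cases z)
      have "(x a - x b)^2 \<le> 2 * (x a)^2 + 2 * (x b)^2"
        using sum_squares_ge_zero[of "x a + x b" 0] by (simp add: power2_eq_square algebra_simps)
      hence "(x a - x b)^2 * (w a * w b) \<le> (2 * (x a)^2 + 2 * (x b)^2) * (w a * w b)"
        using w0 by (intro mult_right_mono) auto
      thus "F z \<le> (2 * ((x (fst z))^2 * w (fst z))) * w (snd z) + (2 * w (fst z)) * ((x (snd z))^2 * w (snd z))"
        by (simp add: z F_def algebra_simps)
    qed
    also have "\<dots> = (\<Sum>k\<in>K. 2 * ((x k)^2 * w k)) * sum w K + (\<Sum>k\<in>K. 2 * w k) * (\<Sum>k\<in>K. (x k)^2 * w k)"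
      unfolding sum.distrib sum_prod_sq[of "\<lambda>a. 2 * ((x a)^2 * w a)" w K]
        sum_prod_sq[of "\<lambda>a. 2 * w a" "\<lambda>b. (x b)^2 * w b" K] ..
    also have "\<dots> = 2 * (\<Sum>k\<in>K. (x k)\<^sup>2 * w k) * sum w K + 2 * sum w K * (\<Sum>k\<in>K. (x k)\<^sup>2 * w k)"
      by (simp add: sum_distrib_left[symmetric])
    also have "\<dots> = 4 * (\<Sum>k\<in>K. (x k)^2 * w k) * sum w K" by simp
    also have "\<dots> \<le> 4 * (4 * B * G) * (exp (1/2) * G)"
      using Hw Hxw G0 assms(2) by (intro mult_mono mult_left_mono) (auto intro!: sum_nonneg simp: w0)
    also have "\<dots> = 16 * exp (1/2) * B * G^2" by (simp add: power2_eq_square)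
    also have "\<dots> \<le> 16 * exp (1/2) * B * (4 * \<sigma> / real p)^2"
      using HG G0 assms(2) by (intro mult_left_mono power_mono) auto
    also have "\<dots> = 256 * exp (1/2) * B^2 / real p^2"
      using B2 by (simp add: power_divide field_simps power2_eq_square)
    also have "\<dots> \<le> 24 * exp 4 * pi * B ^ 2 / real p ^ 2"
    proof -
      have "1 + 7/2 \<le> exp (7/2::real)" by (rule exp_ge_add_one_self)
      have "exp (4::real) = exp (1/2) * exp (7/2)" by (simp add: exp_add[symmetric])
      have "256 * exp (1/2::real) \<le> 24 * exp 4 * pi"
      proof -
        have "256 * exp (1/2::real) \<le> 72 * (exp (1/2) * exp (7/2))"
          using \<open>1 + 7/2 \<le> exp (7/2::real)\<close> by (simp add: mult_left_mono)
        also have "\<dots> \<le> 24 * (exp (1/2) * exp (7/2)) * pi" using pi_gt3 by simp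
        finally show ?thesis using \<open>exp (4::real) = _\<close> by simp
      qed
      hence "256 * exp (1/2) * B^2 \<le> 24 * exp 4 * pi * B ^ 2"
        by (intro mult_right_mono) auto
      thus ?thesis using pp by (intro divide_right_mono) auto
    qed
    finally show ?thesis .
  qed
  have eq: "(\<Sum>(k1, k2) \<in> {(k1::int, k2::int). \<bar>of_int k1 * real p - A\<bar> \<le> s * sqrt B \<and>
                                           \<bar>of_int k2 * real p - A\<bar> \<le> s * sqrt B}.
         (of_int k1 * real p - of_int k2 * real p) ^ 2 *
         exp (- ((of_int k1 * real p - A) ^ 2 / (2 * B)) - (of_int k2 * real p - A) ^ 2 / (2 * B))) = S"
    unfolding setEq summ S_def ..
  show ?thesis unfolding eq using lower upper by simp
qed

end
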